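(* Suppose $L_1$ is any linear order isomorphic to a suborder of $U$ and $L_2$ is a countable linear order isomorphic to a suborder of $U$. Then $L_1\cdot_\omega L_2\cong 1$.
   Context: The countable condensation $\sim_\omega$ on a linear order $L$: $x\sim_\omega y$ iff the closed interval between $x$ and $y$ is countable; $L/\!\sim_\omega$ is the linear order of its classes. $L_1L_2$ is the lexicographic product (each element of $L_1$ replaced by a copy of $L_2$), and $L_1\cdot_\omega L_2$ is the order type of $L_1L_2/\!\sim_\omega$. $U$ is the linear order $R^*+\mathbb{Q}+R$, where $R$ is obtained from $\omega_1$ by replacing each $\alpha<\omega_1$ with a point $u_\alpha$ followed by a copy of the rationals, $R^*$ is the reverse of $R$, and the middle summand is a copy of the rationals. *)

theory Defs
  imports "HOL-Library.Countable_Set"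
begin

text \<open>omega_1: a well-ordered type that is uncountable and all of whose proper
  initial segments are countable (this characterises omega_1 up to isomorphism).\<close>
definition is_omega1 :: "'w::wellorder itself \<Rightarrow> bool" where
  "is_omega1 _ \<longleftrightarrow> uncountable (UNIV :: 'w set) \<and> (\<forall>\<alpha>::'w. countable {\<beta>. \<beta> < \<alpha>})"

text \<open>R: each alpha < omega_1 replaced by a point u_alpha (= (alpha, None))
  followed by a copy of the rationals (= (alpha, Some q)).\<close>
type_synonym 'w Rord = "'w \<times> rat option"

definition R_less :: "'w::wellorder Rord \<Rightarrow> 'w Rord \<Rightarrow> bool" where
  "R_less x y \<longleftrightarrow> fst x < fst y \<or>
     (fst x = fst y \<and> (case (snd x, snd y) of
        (None, Some _) \<Rightarrow> True
      | (Some p, Some q) \<Rightarrow> p < q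
      | _ \<Rightarrow> False))"

text \<open>U = R* + Q + R, carried by the sum type Inl (R reversed) + Inr (Inl Q + Inr R).\<close>
type_synonym 'w Uord = "'w Rord + (rat + 'w Rord)"

definition U_less :: "'w::wellorder Uord \<Rightarrow> 'w Uord \<Rightarrow> bool" where
  "U_less x y \<longleftrightarrow> (case (x, y) of
      (Inl a, Inl b) \<Rightarrow> R_less b a
    | (Inl _, Inr _) \<Rightarrow> True
    | (Inr _, Inl _) \<Rightarrow> False
    | (Inr (Inl p), Inr (Inl q)) \<Rightarrow> p < q
    | (Inr (Inl _), Inr (Inr _)) \<Rightarrow> True
    | (Inr (Inr _), Inr (Inl _)) \<Rightarrow> False
    | (Inr (Inr a), Inr (Inr b)) \<Rightarrow> R_less a b)"

definition embeds_in_U :: "'a::linorder itself \<Rightarrow> 'w::wellorder itself \<Rightarrow> bool" where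
  "embeds_in_U _ _ \<longleftrightarrow> (\<exists>f :: 'a \<Rightarrow> 'w Uord. \<forall>x y. x < y \<longrightarrow> U_less (f x) (f y))"

definition lex_less :: "'a::linorder \<times> 'b::linorder \<Rightarrow> 'a \<times> 'b \<Rightarrow> bool" where
  "lex_less x y \<longleftrightarrow> fst x < fst y \<or> (fst x = fst y \<and> snd x < snd y)"

definition lex_le :: "'a::linorder \<times> 'b::linorder \<Rightarrow> 'a \<times> 'b \<Rightarrow> bool" where
  "lex_le x y \<longleftrightarrow> lex_less x y \<or> x = y"

definition sim_omega :: "'a::linorder \<times> 'b::linorder \<Rightarrow> 'a \<times> 'b \<Rightarrow> bool" where
  "sim_omega x y \<longleftrightarrow> countable {z. (lex_le x z \<and> lex_le z y) \<or> (lex_le y z \<and> lex_le z x)}"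

text \<open>The classes of L1 L2 / ~omega (the underlying set of L1 \<cdot>_omega L2).\<close>
definition cond_omega_classes :: "'a::linorder itself \<Rightarrow> 'b::linorder itself \<Rightarrow> ('a \<times> 'b) set set" where
  "cond_omega_classes _ _ = UNIV // {(x, y). sim_omega x y}"

end

theory Submission
  imports Defs
begin

definition rk :: "'w::wellorder Uord \<Rightarrow> 'w" where
  "rk x = (case x of Inl r \<Rightarrow> fst r | Inr (Inl q) \<Rightarrow> undefined | Inr (Inr r) \<Rightarrow> fst r)"

definition Bset :: "'w::wellorder \<Rightarrow> 'w Uord set" where
  "Bset a = Inl ` ({b. b \<le> a} \<times> UNIV) \<union> range (Inr \<circ> Inl) \<union> (Inr \<circ> Inr) ` ({b. b \<le> a} \<times> UNIV)"

lemma R_less_fst: "R_less a b \<Longrightarrow> fst a \<le> fst b"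
  unfolding R_less_def by auto

lemma Bset_countable:
  assumes "is_omega1 TYPE('w::wellorder)"
  shows "countable (Bset (a::'w))"
proof -
  have "{b. b \<le> a} = insert a {b. b < a}" by auto
  then have c: "countable {b. b \<le> a}" using assms unfolding is_omega1_def by simp
  have "countable ({b. b \<le> a} \<times> (UNIV :: rat option set))" using c by simp
  then show ?thesis unfolding Bset_def by simp
qed

lemma in_Bset:
  assumes "U_less x u \<or> x = u" "U_less u y \<or> u = y"
  shows "u \<in> Bset (max (rk x) (rk y))"
proof (cases u)
  case (Inl r)
  then obtain s where "x = Inl s" "R_less r s \<or> r = s" using assms(1)
    unfolding U_less_def by (cases x; auto split: sum.splits)
  moreover from this(2) have "fst r \<le> fst s" using R_less_fst by blast
  ultimately have "fst r \<le> rk x" unfolding rk_def by simp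
  then have "r \<in> {b. b \<le> max (rk x) (rk y)} \<times> UNIV" by (cases r) (auto simp: le_max_iff_disj)
  then show ?thesis using Inl unfolding Bset_def by blast
next
  case (Inr v)
  show ?thesis
  proof (cases v)
    case (Inl q) then show ?thesis using Inr unfolding Bset_def by auto
  next
    case (Inr r)
    then obtain s where "y = Inr (Inr s)" "R_less r s \<or> r = s" using assms(2) \<open>u = Inr v\<close>
      unfolding U_less_def by (cases y; auto split: sum.splits)
    moreover from this(2) have "fst r \<le> fst s" using R_less_fst by blast
    ultimately have "fst r \<le> rk y" unfolding rk_def by simp
    then have "r \<in> {b. b \<le> max (rk x) (rk y)} \<times> UNIV" by (cases r) (auto simp: le_max_iff_disj)
    then show ?thesis using Inr \<open>u = Inr v\<close> unfolding Bset_def by auto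
  qed
qed

theorem lemma5p3:
  assumes "is_omega1 TYPE('w::wellorder)"
    and "embeds_in_U TYPE('a::linorder) TYPE('w)"
    and "embeds_in_U TYPE('b::linorder) TYPE('w)"
    and "countable (UNIV :: 'b set)"
  shows "card (cond_omega_classes TYPE('a) TYPE('b)) = 1"
proof -
  obtain f :: "'a \<Rightarrow> 'w Uord" where f: "\<And>x y. x < y \<Longrightarrow> U_less (f x) (f y)"
    using assms(2) unfolding embeds_in_U_def by blast
  have fle: "x \<le> y \<Longrightarrow> U_less (f x) (f y) \<or> f x = f y" for x y
    using f by (cases "x = y") auto
  have finj: "inj f"
  proof (rule injI)
    fix x y assume "f x = f y"
    moreover have "\<not> U_less z z" for z :: "'w Uord"
      unfolding U_less_def R_less_def by (auto split: sum.splits option.splits)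
    ultimately show "x = y" using f by (metis linorder_neqE)
  qed
  have cnt: "countable {c. a \<le> c \<and> c \<le> a'}" for a a' :: 'a
  proof -
    let ?B = "Bset (max (rk (f a)) (rk (f a')))"
    have "f ` {c. a \<le> c \<and> c \<le> a'} \<subseteq> ?B"
      using in_Bset fle by blast
    then have "countable (f ` {c. a \<le> c \<and> c \<le> a'})"
      using Bset_countable[OF assms(1)] countable_subset by blast
    then show ?thesis using finj countable_image_inj_on inj_on_subset by blast
  qed
  have all: "sim_omega x y" for x y :: "'a \<times> 'b"
  proof -
    have sub: "{z. (lex_le x z \<and> lex_le z y) \<or> (lex_le y z \<and> lex_le z x)} \<subseteq>
      ({c. fst x \<le> c \<and> c \<le> fst y} \<union> {c. fst y \<le> c \<and> c \<le> fst x}) \<times> UNIV"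
      unfolding lex_le_def lex_less_def by (auto simp: less_imp_le)
    have "countable (({c. fst x \<le> c \<and> c \<le> fst y} \<union> {c. fst y \<le> c \<and> c \<le> fst x}) \<times> (UNIV :: 'b set))"
      using cnt assms(4) by simp
    then show ?thesis unfolding sim_omega_def using sub countable_subset by blast
  qed
  have "{(x, y). sim_omega x y} = (UNIV :: (('a \<times> 'b) \<times> ('a \<times> 'b)) set)"
    using all by auto
  then have "cond_omega_classes TYPE('a) TYPE('b) = {UNIV}"
    unfolding cond_omega_classes_def quotient_def by auto
  then show ?thesis by simp
qed

end
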